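(* Let $n\ge2$, $\omega\in\mathbb{R}^n$, $k\in\mathbb{R}_{>0}^n$ satisfy (IC1) $\sum_\mu\omega_\mu=0$, (IC2) $\omega\ne0$, (IC3) $\left|\frac{\omega_1}{k_1}\right|\le\cdots\le\left|\frac{\omega_n}{k_n}\right|$, and (IC4) $k_1\ge k_2\ge\cdots\ge k_n$. For $\sigma\in\{-1,+1\}^n$ let $f_\sigma(R)=-R+\frac1n\sum_{\mu=1}^n\sigma_\mu\sqrt{k_\mu^2R-\omega_\mu^2}$. Let $\sigma\in\{-1,+1\}^n$ and indices $\mu<\nu$ with $\sigma_\mu=+1$, $\sigma_\nu=-1$, and let $\sigma'$ agree with $\sigma$ except that $\sigma'_\mu=-1$ and $\sigma'_\nu=+1$. If $f_\sigma$ has no positive roots, then $f_{\sigma'}$ has no positive roots.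
   Context: Square roots are nonnegative real square roots; a positive root of $f_\sigma$ is a real $R>0$ with $k_\mu^2R-\omega_\mu^2\ge0$ for all $\mu$ and $f_\sigma(R)=0$. *)

theory Defs
  imports Complex_Main
begin

text \<open>Vectors in R^n are functions nat => real indexed by 1..n.
  A sign vector sigma takes values in {-1,+1} on 1..n.\<close>

definition f_sigma :: "nat \<Rightarrow> (nat \<Rightarrow> real) \<Rightarrow> (nat \<Rightarrow> real) \<Rightarrow> (nat \<Rightarrow> real) \<Rightarrow> real \<Rightarrow> real" where
  "f_sigma n k \<omega> \<sigma> R = - R + (1 / real n) * (\<Sum>\<mu>=1..n. \<sigma> \<mu> * sqrt ((k \<mu>)\<^sup>2 * R - (\<omega> \<mu>)\<^sup>2))"

definition positive_root :: "nat \<Rightarrow> (nat \<Rightarrow> real) \<Rightarrow> (nat \<Rightarrow> real) \<Rightarrow> (nat \<Rightarrow> real) \<Rightarrow> real \<Rightarrow> bool" where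
  "positive_root n k \<omega> \<sigma> R \<longleftrightarrow> R > 0 \<and> (\<forall>\<mu>\<in>{1..n}. (k \<mu>)\<^sup>2 * R - (\<omega> \<mu>)\<^sup>2 \<ge> 0) \<and> f_sigma n k \<omega> \<sigma> R = 0"

end

theory Submission
  imports Defs
begin

theorem lemma4:
  fixes n :: nat and \<omega> k \<sigma> \<sigma>' :: "nat \<Rightarrow> real" and \<mu> \<nu> :: nat
  assumes n2: "n \<ge> 2"
    and kpos: "\<forall>i\<in>{1..n}. k i > 0"
    and IC1: "(\<Sum>i=1..n. \<omega> i) = 0"
    and IC2: "\<exists>i\<in>{1..n}. \<omega> i \<noteq> 0"
    and IC3: "\<forall>i\<in>{1..n}. \<forall>j\<in>{1..n}. i \<le> j \<longrightarrow> \<bar>\<omega> i / k i\<bar> \<le> \<bar>\<omega> j / k j\<bar>"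
    and IC4: "\<forall>i\<in>{1..n}. \<forall>j\<in>{1..n}. i \<le> j \<longrightarrow> k j \<le> k i"
    and sig: "\<forall>i\<in>{1..n}. \<sigma> i = 1 \<or> \<sigma> i = -1"
    and idx: "\<mu> \<in> {1..n}" "\<nu> \<in> {1..n}" "\<mu> < \<nu>"
    and sm: "\<sigma> \<mu> = 1" and sn: "\<sigma> \<nu> = -1"
    and sig': "\<forall>i\<in>{1..n}. i \<noteq> \<mu> \<and> i \<noteq> \<nu> \<longrightarrow> \<sigma>' i = \<sigma> i"
    and sm': "\<sigma>' \<mu> = -1" and sn': "\<sigma>' \<nu> = 1"
    and noroot: "\<not> (\<exists>R. positive_root n k \<omega> \<sigma> R)"
  shows "\<not> (\<exists>R. positive_root n k \<omega> \<sigma>' R)"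
proof
  assume "\<exists>R. positive_root n k \<omega> \<sigma>' R"
  then obtain R1 where R1: "R1 > 0" "\<forall>i\<in>{1..n}. (k i)\<^sup>2 * R1 - (\<omega> i)\<^sup>2 \<ge> 0"
      "f_sigma n k \<omega> \<sigma>' R1 = 0"
    unfolding positive_root_def by blast
  define s where "s R i = sqrt ((k i)\<^sup>2 * R - (\<omega> i)\<^sup>2)" for R i
  have dom: "(k i)\<^sup>2 * R - (\<omega> i)\<^sup>2 \<ge> 0" if "R \<ge> R1" "i \<in> {1..n}" for R i
  proof -
    have "(k i)\<^sup>2 * R1 \<le> (k i)\<^sup>2 * R" using that by (simp add: mult_left_mono)
    thus ?thesis using R1(2) that by fastforce
  qed
  have kmn: "k \<nu> \<le> k \<mu>" "0 < k \<nu>" "0 < k \<mu>" using IC4 idx kpos by auto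
  have a: "\<bar>\<omega> \<mu> / k \<mu>\<bar> \<le> \<bar>\<omega> \<nu> / k \<nu>\<bar>" using IC3 idx by auto
  have a2: "(\<omega> \<mu> / k \<mu>)\<^sup>2 \<le> (\<omega> \<nu> / k \<nu>)\<^sup>2"
    using a by (metis abs_ge_zero power2_abs power_mono)
  have snu: "s R1 \<nu> \<le> s R1 \<mu>"
  proof -
    define A where "A = (\<omega> \<mu> / k \<mu>)\<^sup>2"
    define B where "B = (\<omega> \<nu> / k \<nu>)\<^sup>2"
    have eA: "(\<omega> \<mu>)\<^sup>2 = (k \<mu>)\<^sup>2 * A" using kmn by (simp add: A_def power_divide)
    have eB: "(\<omega> \<nu>)\<^sup>2 = (k \<nu>)\<^sup>2 * B" using kmn by (simp add: B_def power_divide)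
    have "0 \<le> (k \<nu>)\<^sup>2 * (R1 - B)" using dom[of R1 \<nu>] idx eB by (simp add: algebra_simps)
    hence RB: "R1 - B \<ge> 0" using kmn by (simp add: zero_le_mult_iff)
    have AB: "A \<le> B" using a2 A_def B_def by simp
    have "(k \<nu>)\<^sup>2 * (R1 - B) \<le> (k \<mu>)\<^sup>2 * (R1 - B)"
      using kmn RB by (intro mult_right_mono power_mono) auto
    also have "\<dots> \<le> (k \<mu>)\<^sup>2 * (R1 - A)" using AB by (intro mult_left_mono) auto
    finally have "(k \<nu>)\<^sup>2 * R1 - (\<omega> \<nu>)\<^sup>2 \<le> (k \<mu>)\<^sup>2 * R1 - (\<omega> \<mu>)\<^sup>2"
      using eA eB by (simp add: algebra_simps)
    thus ?thesis unfolding s_def by simp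
  qed
  have munu: "\<mu> \<noteq> \<nu>" using idx by simp
  have diff: "(\<Sum>i=1..n. \<sigma>' i * s R1 i) - (\<Sum>i=1..n. \<sigma> i * s R1 i) = 2 * s R1 \<nu> - 2 * s R1 \<mu>"
  proof -
    have "(\<Sum>i=1..n. \<sigma>' i * s R1 i) - (\<Sum>i=1..n. \<sigma> i * s R1 i)
        = (\<Sum>i=1..n. (\<sigma>' i - \<sigma> i) * s R1 i)"
      by (simp add: sum_subtractf left_diff_distrib)
    also have "\<dots> = (\<Sum>i\<in>{\<mu>,\<nu>}. (\<sigma>' i - \<sigma> i) * s R1 i)"
      using idx sig' by (intro sum.mono_neutral_right) auto
    also have "\<dots> = 2 * s R1 \<nu> - 2 * s R1 \<mu>"
      using munu sm sn sm' sn' by simp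
    finally show ?thesis .
  qed
  have fs: "f_sigma n k \<omega> \<sigma> R = - R + (1 / real n) * (\<Sum>i=1..n. \<sigma> i * s R i)" for R
    unfolding f_sigma_def s_def by simp
  have fs': "f_sigma n k \<omega> \<sigma>' R = - R + (1 / real n) * (\<Sum>i=1..n. \<sigma>' i * s R i)" for R
    unfolding f_sigma_def s_def by simp
  have npos: "real n > 0" using n2 by simp
  have f1: "f_sigma n k \<omega> \<sigma> R1 \<ge> 0"
  proof -
    have "(\<Sum>i=1..n. \<sigma>' i * s R1 i) \<le> (\<Sum>i=1..n. \<sigma> i * s R1 i)" using diff snu by linarith
    hence "(1 / real n) * (\<Sum>i=1..n. \<sigma>' i * s R1 i) \<le> (1 / real n) * (\<Sum>i=1..n. \<sigma> i * s R1 i)"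
      using npos by (intro mult_left_mono) auto
    thus ?thesis using R1(3) fs[of R1] fs'[of R1] by linarith
  qed
  define K where "K = (\<Sum>i=1..n. k i)"
  have K0: "K \<ge> 0" unfolding K_def using kpos by (intro sum_nonneg) (auto simp: less_imp_le)
  define R2 where "R2 = max R1 ((K+1)\<^sup>2)"
  have R12: "R1 \<le> R2" unfolding R2_def by simp
  have f2: "f_sigma n k \<omega> \<sigma> R2 < 0"
  proof -
    have trm: "\<sigma> i * s R2 i \<le> k i * sqrt R2" if "i \<in> {1..n}" for i
    proof -
      have d: "(k i)\<^sup>2 * R2 - (\<omega> i)\<^sup>2 \<ge> 0" using dom[OF R12 that] .
      have "s R2 i \<le> sqrt ((k i)\<^sup>2 * R2)" unfolding s_def by simp
      also have "\<dots> = k i * sqrt R2" using kpos that by (simp add: real_sqrt_mult less_imp_le)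
      finally have le: "s R2 i \<le> k i * sqrt R2" .
      have "s R2 i \<ge> 0" unfolding s_def using d by simp
      moreover have "\<sigma> i = 1 \<or> \<sigma> i = -1" using sig that by blast
      ultimately show ?thesis using le by auto
    qed
    have S: "(\<Sum>i=1..n. \<sigma> i * s R2 i) \<le> K * sqrt R2"
      unfolding K_def sum_distrib_right using trm by (intro sum_mono) auto
    have "(1 / real n) * (\<Sum>i=1..n. \<sigma> i * s R2 i) \<le> (1 / real n) * (K * sqrt R2)"
      using S npos by (intro mult_left_mono) auto
    also have "\<dots> \<le> K * sqrt R2"
    proof -
      have "1 / real n \<le> 1" using n2 by simp
      moreover have "K * sqrt R2 \<ge> 0" using K0 R1(1) R12 by simp
      ultimately show ?thesis using mult_left_le_one_le[of "K * sqrt R2" "1 / real n"] by simp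
    qed
    also have "\<dots> < R2"
    proof -
      have "sqrt R2 \<ge> sqrt ((K+1)\<^sup>2)" unfolding R2_def by (intro real_sqrt_le_mono) simp
      hence sq: "sqrt R2 \<ge> K + 1" using K0 by simp
      have "R2 \<ge> 0" using R1(1) R12 by simp
      hence "R2 = sqrt R2 * sqrt R2" by simp
      moreover have "K * sqrt R2 < (K+1) * sqrt R2" using sq K0 R1(1) R12 by (simp add: distrib_right)
      moreover have "(K+1) * sqrt R2 \<le> sqrt R2 * sqrt R2" using sq K0 R1(1) R12 by (intro mult_right_mono) auto
      ultimately show ?thesis by linarith
    qed
    finally show ?thesis using fs by simp
  qed
  have cont: "isCont (f_sigma n k \<omega> \<sigma>) x" for x
    unfolding f_sigma_def[abs_def] by (intro continuous_intros)
  obtain x where x: "R1 \<le> x" "x \<le> R2" "f_sigma n k \<omega> \<sigma> x = 0"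
    using IVT2[of "f_sigma n k \<omega> \<sigma>" R2 0 R1] f1 f2 R12 cont by force
  have "positive_root n k \<omega> \<sigma> x"
    unfolding positive_root_def using x R1(1) dom by auto
  thus False using noroot by blast
qed

end
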